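(* Let $m\ge2$, $k\ge2$. (1) For every irreducible $(\mathbf T,\sigma)\in\mathcal C(m)$, \[ km-|\mathbf T|+\frac{a(\sigma)}2\ge m . \] (2) If $(\mathbf T,\sigma)\in\mathcal C(m)$ is irreducible but not circle-like and $km-|\mathbf T|+\frac{a(\sigma)}2=m$, then the cycle decomposition of $\sigma$ contains at least one cycle of length at least $3$.
   Context: $[p]=\{1,\dots,p\}$. $S(m,k)$ is the set of equivalence classes (under permutations of $[km]$ applied entrywise; a representative fixed in each class) of $\mathbf T=(T_1,\dots,T_m)$, $T_i=(T_{i,1},\dots,T_{i,k})\in[km]^k$ with pairwise distinct entries; $\mathrm{Range}(\mathbf T)=\{T_{i,j}\}$, $|\mathbf T|=|\mathrm{Range}(\mathbf T)|$. For $\sigma$ a permutation of $\mathrm{Range}(\mathbf T)$, $a(\sigma)=\#\{q:\sigma(q)\ne q\}$. The $(\mathbf T,\sigma)$-graph has vertices $(i,j)$, $i\in[m],j\in[k]$; black edges $(i,j)$–$(i,j+1)$; solid red edges between distinct $(i,j),(i',j')$ with $T_{i,j}=T_{i',j'}$; dotted red edges between $(i,j),(i',j')$ with $T_{i,j}\ne T_{i',j'}$ and $\sigma(T_{i,j})=T_{i',j'}$ or $\sigma(T_{i',j'})=T_{i,j}$. $\mathcal C(m)$: pairs with $\mathbf T\in S(m,k)$ and connected graph. $T_{i,j}$ is a connection point if $\sigma(T_{i,j})\notin T_i$ or $T_{i,j}\in T_{i'}$ for some $i'\ne i$. $(\mathbf T,\sigma)$ is reducible if its graph is connected and there are $i,j$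 with $T_{i,j}$ the only connection point in $T_i$ and $\sigma(x)=x$ for all entries $x\ne T_{i,j}$ of $T_i$; irreducible = connected and not reducible. An irreducible pair is circle-like if for each $i\in[m]$ there are exactly two distinct $i_1,i_2\in[k]$ such that each of $(i,i_1),(i,i_2)$ has exactly one red edge and that edge goes to some $(i',j')$ with $i'\ne i$, and all other vertices have no red edges. *)

theory Defs
  imports Complex_Main "HOL-Combinatorics.Permutations" "HOL-Combinatorics.Orbits"
begin

text \<open>A tuple T = (T_1,...,T_m), T_i = (T_{i,1},...,T_{i,k}) is encoded as a function
  T :: nat => nat => nat, with T i j = T_{i,j} for i in {1..m}, j in {1..k}.\<close>

definition is_tuple :: "nat \<Rightarrow> nat \<Rightarrow> (nat \<Rightarrow> nat \<Rightarrow> nat) \<Rightarrow> bool" where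
  "is_tuple m k T \<longleftrightarrow>
     (\<forall>i\<in>{1..m}. \<forall>j\<in>{1..k}. T i j \<in> {1..k*m}) \<and>
     (\<forall>i\<in>{1..m}. inj_on (T i) {1..k})"

definition RangeT :: "nat \<Rightarrow> nat \<Rightarrow> (nat \<Rightarrow> nat \<Rightarrow> nat) \<Rightarrow> nat set" where
  "RangeT m k T = {T i j | i j. i \<in> {1..m} \<and> j \<in> {1..k}}"

definition row :: "nat \<Rightarrow> (nat \<Rightarrow> nat \<Rightarrow> nat) \<Rightarrow> nat \<Rightarrow> nat set" where
  "row k T i = T i ` {1..k}"

definition a_perm :: "nat set \<Rightarrow> (nat \<Rightarrow> nat) \<Rightarrow> nat" where
  "a_perm R \<sigma> = card {q \<in> R. \<sigma> q \<noteq> q}"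

definition vertices :: "nat \<Rightarrow> nat \<Rightarrow> (nat \<times> nat) set" where
  "vertices m k = {1..m} \<times> {1..k}"

definition black_edge :: "nat \<Rightarrow> nat \<Rightarrow> nat \<times> nat \<Rightarrow> nat \<times> nat \<Rightarrow> bool" where
  "black_edge m k v w \<longleftrightarrow> v \<in> vertices m k \<and> w \<in> vertices m k \<and>
     fst v = fst w \<and> (snd w = snd v + 1 \<or> snd v = snd w + 1)"

definition solid_red :: "nat \<Rightarrow> nat \<Rightarrow> (nat \<Rightarrow> nat \<Rightarrow> nat) \<Rightarrow> nat \<times> nat \<Rightarrow> nat \<times> nat \<Rightarrow> bool" where
  "solid_red m k T v w \<longleftrightarrow> v \<in> vertices m k \<and> w \<in> vertices m k \<and> v \<noteq> w \<and>
     T (fst v) (snd v) = T (fst w) (snd w)"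

definition dotted_red :: "nat \<Rightarrow> nat \<Rightarrow> (nat \<Rightarrow> nat \<Rightarrow> nat) \<Rightarrow> (nat \<Rightarrow> nat) \<Rightarrow>
    nat \<times> nat \<Rightarrow> nat \<times> nat \<Rightarrow> bool" where
  "dotted_red m k T \<sigma> v w \<longleftrightarrow> v \<in> vertices m k \<and> w \<in> vertices m k \<and>
     T (fst v) (snd v) \<noteq> T (fst w) (snd w) \<and>
     (\<sigma> (T (fst v) (snd v)) = T (fst w) (snd w) \<or> \<sigma> (T (fst w) (snd w)) = T (fst v) (snd v))"

definition red_edge :: "nat \<Rightarrow> nat \<Rightarrow> (nat \<Rightarrow> nat \<Rightarrow> nat) \<Rightarrow> (nat \<Rightarrow> nat) \<Rightarrow>
    nat \<times> nat \<Rightarrow> nat \<times> nat \<Rightarrow> bool" where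
  "red_edge m k T \<sigma> v w \<longleftrightarrow> solid_red m k T v w \<or> dotted_red m k T \<sigma> v w"

definition graph_edge :: "nat \<Rightarrow> nat \<Rightarrow> (nat \<Rightarrow> nat \<Rightarrow> nat) \<Rightarrow> (nat \<Rightarrow> nat) \<Rightarrow>
    nat \<times> nat \<Rightarrow> nat \<times> nat \<Rightarrow> bool" where
  "graph_edge m k T \<sigma> v w \<longleftrightarrow> black_edge m k v w \<or> red_edge m k T \<sigma> v w"

definition graph_connected :: "nat \<Rightarrow> nat \<Rightarrow> (nat \<Rightarrow> nat \<Rightarrow> nat) \<Rightarrow> (nat \<Rightarrow> nat) \<Rightarrow> bool" where
  "graph_connected m k T \<sigma> \<longleftrightarrow>
     (\<forall>v\<in>vertices m k. \<forall>w\<in>vertices m k. (graph_edge m k T \<sigma>)\<^sup>*\<^sup>* v w)"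

definition in_C :: "nat \<Rightarrow> nat \<Rightarrow> (nat \<Rightarrow> nat \<Rightarrow> nat) \<Rightarrow> (nat \<Rightarrow> nat) \<Rightarrow> bool" where
  "in_C m k T \<sigma> \<longleftrightarrow> is_tuple m k T \<and> \<sigma> permutes RangeT m k T \<and> graph_connected m k T \<sigma>"

definition connection_point :: "nat \<Rightarrow> nat \<Rightarrow> (nat \<Rightarrow> nat \<Rightarrow> nat) \<Rightarrow> (nat \<Rightarrow> nat) \<Rightarrow>
    nat \<Rightarrow> nat \<Rightarrow> bool" where
  "connection_point m k T \<sigma> i j \<longleftrightarrow>
     \<sigma> (T i j) \<notin> row k T i \<or> (\<exists>i'\<in>{1..m}. i' \<noteq> i \<and> T i j \<in> row k T i')"

definition reducible :: "nat \<Rightarrow> nat \<Rightarrow> (nat \<Rightarrow> nat \<Rightarrow> nat) \<Rightarrow> (nat \<Rightarrow> nat) \<Rightarrow> bool" where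
  "reducible m k T \<sigma> \<longleftrightarrow> graph_connected m k T \<sigma> \<and>
     (\<exists>i\<in>{1..m}. \<exists>j\<in>{1..k}.
        connection_point m k T \<sigma> i j \<and>
        (\<forall>j'\<in>{1..k}. connection_point m k T \<sigma> i j' \<longrightarrow> T i j' = T i j) \<and>
        (\<forall>x\<in>row k T i. x \<noteq> T i j \<longrightarrow> \<sigma> x = x))"

definition irreducible_pair :: "nat \<Rightarrow> nat \<Rightarrow> (nat \<Rightarrow> nat \<Rightarrow> nat) \<Rightarrow> (nat \<Rightarrow> nat) \<Rightarrow> bool" where
  "irreducible_pair m k T \<sigma> \<longleftrightarrow> graph_connected m k T \<sigma> \<and> \<not> reducible m k T \<sigma>"

definition single_outer_red :: "nat \<Rightarrow> nat \<Rightarrow> (nat \<Rightarrow> nat \<Rightarrow> nat) \<Rightarrow> (nat \<Rightarrow> nat) \<Rightarrow>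
    nat \<Rightarrow> nat \<Rightarrow> bool" where
  "single_outer_red m k T \<sigma> i j \<longleftrightarrow>
     (\<exists>w. {u. red_edge m k T \<sigma> (i, j) u} = {w} \<and> fst w \<noteq> i)"

definition circle_like :: "nat \<Rightarrow> nat \<Rightarrow> (nat \<Rightarrow> nat \<Rightarrow> nat) \<Rightarrow> (nat \<Rightarrow> nat) \<Rightarrow> bool" where
  "circle_like m k T \<sigma> \<longleftrightarrow> irreducible_pair m k T \<sigma> \<and>
     (\<forall>i\<in>{1..m}. \<exists>i1 i2. i1 \<noteq> i2 \<and>
        {j \<in> {1..k}. single_outer_red m k T \<sigma> i j} = {i1, i2} \<and>
        (\<forall>j\<in>{1..k} - {i1, i2}. \<forall>u. \<not> red_edge m k T \<sigma> (i, j) u))"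

end

theory Submission
  imports Defs
begin

locale pctx =
  fixes m k :: nat and T :: "nat \<Rightarrow> nat \<Rightarrow> nat" and \<sigma> :: "nat \<Rightarrow> nat"
  assumes m2: "m \<ge> 2" and k2: "k \<ge> 2" and tup: "is_tuple m k T"
    and perm: "\<sigma> permutes RangeT m k T" and conn: "graph_connected m k T \<sigma>"
begin

abbreviation "R \<equiv> RangeT m k T"

lemma R_iff0: "x \<in> R \<longleftrightarrow> (\<exists>i\<in>{1..m}. \<exists>j\<in>{1..k}. x = T i j)"
  unfolding RangeT_def by blast

lemma R_iff: "x \<in> R \<longleftrightarrow> (\<exists>i\<in>{1..m}. x \<in> row k T i)"
  unfolding R_iff0 row_def image_iff by simp

lemma finR: "finite R"
proof -
  have "R \<subseteq> {1..k*m}" using tup unfolding is_tuple_def by (auto simp: R_iff0)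
  then show ?thesis by (rule finite_subset) simp
qed

lemma row_sub: "i \<in> {1..m} \<Longrightarrow> row k T i \<subseteq> R"
  using R_iff by blast

lemma fin_row: "finite (row k T i)"
  unfolding row_def by simp

lemma card_row: "i \<in> {1..m} \<Longrightarrow> card (row k T i) = k"
proof -
  assume "i \<in> {1..m}"
  then have "inj_on (T i) {1..k}" using tup unfolding is_tuple_def by blast
  then show ?thesis unfolding row_def by (simp add: card_image)
qed

lemma sig_inj: "inj \<sigma>" by (rule permutes_inj[OF perm])

lemma sig_R: "x \<in> R \<Longrightarrow> \<sigma> x \<in> R" by (rule permutes_in_image[OF perm, THEN iffD2])

lemma sig_out: "x \<notin> R \<Longrightarrow> \<sigma> x = x" by (rule permutes_not_in[OF perm])

definition cnt :: "nat \<Rightarrow> nat" where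
  "cnt x = card {i\<in>{1..m}. x \<in> row k T i}"

definition fv :: "nat \<Rightarrow> real" where
  "fv x = (real (cnt x) - 1 + (if \<sigma> x \<noteq> x then 1/2 else 0)) / real (cnt x)"

lemma sum_swap_gen:
  "(\<Sum>i\<in>{1..m}. \<Sum>x\<in>row k T i. g x) = (\<Sum>x\<in>R. real (cnt x) * g x)"
proof -
  have "(\<Sum>i\<in>{1..m}. \<Sum>x\<in>row k T i. g x) = (\<Sum>i\<in>{1..m}. \<Sum>x\<in>R. if x \<in> row k T i then g x else 0)"
  proof (rule sum.cong[OF refl])
    fix i assume "i \<in> {1..m}"
    then have "row k T i \<subseteq> R" by (rule row_sub)
    then show "(\<Sum>x\<in>row k T i. g x) = (\<Sum>x\<in>R. if x \<in> row k T i then g x else 0)"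
      using finR sum.inter_restrict[of R g "row k T i"] by (simp add: Int_absorb1)
  qed
  also have "\<dots> = (\<Sum>x\<in>R. \<Sum>i\<in>{1..m}. if x \<in> row k T i then g x else 0)"
    by (rule sum.swap)
  also have "\<dots> = (\<Sum>x\<in>R. real (cnt x) * g x)"
  proof (rule sum.cong[OF refl])
    fix x
    have "(\<Sum>i\<in>{1..m}. if x \<in> row k T i then g x else 0) = (\<Sum>i\<in>{1..m} \<inter> {i. x \<in> row k T i}. g x)"
      using sum.inter_restrict[of "{1..m}" "\<lambda>_. g x" "{i. x \<in> row k T i}"] by simp
    also have "{1..m} \<inter> {i. x \<in> row k T i} = {i\<in>{1..m}. x \<in> row k T i}" by blast
    finally show "(\<Sum>i\<in>{1..m}. if x \<in> row k T i then g x else 0) = real (cnt x) * g x"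
      by (simp add: cnt_def)
  qed
  finally show ?thesis .
qed

definition act :: "nat \<Rightarrow> bool" where
  "act x \<longleftrightarrow> cnt x \<ge> 2 \<or> \<sigma> x \<noteq> x"

lemma cnt_pos: "x \<in> R \<Longrightarrow> cnt x \<ge> 1"
proof -
  assume "x \<in> R"
  then obtain i where "i \<in> {1..m}" "x \<in> row k T i" using R_iff by blast
  then have "i \<in> {i\<in>{1..m}. x \<in> row k T i}" by blast
  then have "{i\<in>{1..m}. x \<in> row k T i} \<noteq> {}" by blast
  then show ?thesis unfolding cnt_def by (simp add: Suc_le_eq card_gt_0_iff)
qed

lemma shared_iff:
  assumes "i \<in> {1..m}" "x \<in> row k T i"
  shows "cnt x \<ge> 2 \<longleftrightarrow> (\<exists>i'\<in>{1..m}. i' \<noteq> i \<and> x \<in> row k T i')"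
proof -
  define S where "S = {i\<in>{1..m}. x \<in> row k T i}"
  have fS: "finite S" unfolding S_def by simp
  have iS: "i \<in> S" using assms unfolding S_def by blast
  have "card (S - {i}) = card S - 1" using iS fS by simp
  moreover have "card S > 0" using iS fS card_gt_0_iff[of S] by blast
  ultimately have "card S \<ge> 2 \<longleftrightarrow> card (S - {i}) > 0" by linarith
  also have "\<dots> \<longleftrightarrow> S - {i} \<noteq> {}" using fS by (simp add: card_gt_0_iff)
  also have "\<dots> \<longleftrightarrow> (\<exists>i'\<in>{1..m}. i' \<noteq> i \<and> x \<in> row k T i')" unfolding S_def by blast
  finally show ?thesis unfolding cnt_def S_def by simp
qed

lemma fv_nonneg: "x \<in> R \<Longrightarrow> fv x \<ge> 0"
proof -
  assume "x \<in> R"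
  then have c: "real (cnt x) \<ge> 1" using cnt_pos by simp
  then show ?thesis unfolding fv_def by (intro divide_nonneg_pos) auto
qed

lemma fv_half: "x \<in> R \<Longrightarrow> act x \<Longrightarrow> fv x \<ge> 1/2"
proof -
  assume xR: "x \<in> R" and a: "act x"
  have c: "real (cnt x) \<ge> 1" using cnt_pos[OF xR] by simp
  show ?thesis
  proof (cases "\<sigma> x \<noteq> x")
    case True
    then have e: "fv x = (real (cnt x) - 1/2) / real (cnt x)" unfolding fv_def by simp
    have "1/2 * real (cnt x) \<le> real (cnt x) - 1/2" using c by simp
    then show ?thesis unfolding e using c by (subst pos_le_divide_eq) auto
  next
    case False
    then have "cnt x \<ge> 2" using a unfolding act_def by blast
    then have c2: "real (cnt x) \<ge> 2" by simp
    have e: "fv x = (real (cnt x) - 1) / real (cnt x)" using False unfolding fv_def by simp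
    have "1/2 * real (cnt x) \<le> real (cnt x) - 1" using c2 by simp
    then show ?thesis unfolding e using c2 by (subst pos_le_divide_eq) auto
  qed
qed

lemma fv_zero: "x \<in> R \<Longrightarrow> \<not> act x \<Longrightarrow> fv x = 0"
proof -
  assume xR: "x \<in> R" and a: "\<not> act x"
  then have "cnt x = 1" "\<sigma> x = x" using cnt_pos[OF xR] unfolding act_def by auto
  then show ?thesis unfolding fv_def by simp
qed

lemma fv_eq_half: "x \<in> R \<Longrightarrow> fv x = 1/2 \<Longrightarrow> (cnt x = 2 \<and> \<sigma> x = x) \<or> (cnt x = 1 \<and> \<sigma> x \<noteq> x)"
proof -
  assume xR: "x \<in> R" and h: "fv x = 1/2"
  have c: "real (cnt x) \<ge> 1" using cnt_pos[OF xR] by simp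
  show ?thesis
  proof (cases "\<sigma> x \<noteq> x")
    case True
    then have "(real (cnt x) - 1/2) / real (cnt x) = 1/2" using h unfolding fv_def by simp
    then have "real (cnt x) = 1" using c by (simp add: field_simps)
    then show ?thesis using True by simp
  next
    case False
    then have "(real (cnt x) - 1) / real (cnt x) = 1/2" using h unfolding fv_def by simp
    then have "real (cnt x) = 2" using c by (simp add: field_simps)
    then show ?thesis using False by simp
  qed
qed

lemma total:
  "(\<Sum>i\<in>{1..m}. \<Sum>x\<in>row k T i. fv x)
     = real (k * m) - real (card R) + real (a_perm R \<sigma>) / 2"
proof -
  define h where "h x = (if \<sigma> x \<noteq> x then 1/2 else (0::real))" for x
  have "(\<Sum>i\<in>{1..m}. \<Sum>x\<in>row k T i. fv x) = (\<Sum>x\<in>R. real (cnt x) * fv x)"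
    by (rule sum_swap_gen)
  also have "\<dots> = (\<Sum>x\<in>R. real (cnt x) - 1 + h x)"
  proof (rule sum.cong[OF refl])
    fix x assume "x \<in> R"
    then have "real (cnt x) \<noteq> 0" using cnt_pos by (metis not_one_le_zero of_nat_eq_0_iff)
    then show "real (cnt x) * fv x = real (cnt x) - 1 + h x" unfolding fv_def h_def by simp
  qed
  also have "\<dots> = (\<Sum>x\<in>R. real (cnt x)) - real (card R) + (\<Sum>x\<in>R. h x)"
    by (simp add: sum.distrib sum_subtractf)
  also have "(\<Sum>x\<in>R. real (cnt x)) = real (k * m)"
  proof -
    have "(\<Sum>x\<in>R. real (cnt x)) = (\<Sum>x\<in>R. real (cnt x) * 1)" by simp
    also have "\<dots> = (\<Sum>i\<in>{1..m}. \<Sum>x\<in>row k T i. (1::real))" by (rule sum_swap_gen[symmetric])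
    also have "\<dots> = (\<Sum>i\<in>{1..m}. real k)" by (rule sum.cong[OF refl]) (simp add: card_row)
    finally show ?thesis by simp
  qed
  also have "(\<Sum>x\<in>R. h x) = real (a_perm R \<sigma>) / 2"
  proof -
    have "(\<Sum>x\<in>R. h x) = (\<Sum>x\<in>R \<inter> {x. \<sigma> x \<noteq> x}. 1/2)"
      using sum.inter_restrict[of R "\<lambda>_. (1/2::real)" "{x. \<sigma> x \<noteq> x}", OF finR] unfolding h_def by simp
    also have "R \<inter> {x. \<sigma> x \<noteq> x} = {q \<in> R. \<sigma> q \<noteq> q}" by blast
    finally show ?thesis unfolding a_perm_def by simp
  qed
  finally show ?thesis .
qed

lemma edge_vert: "graph_edge m k T \<sigma> v w \<Longrightarrow> v \<in> vertices m k \<and> w \<in> vertices m k"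
  unfolding graph_edge_def black_edge_def red_edge_def solid_red_def dotted_red_def by argo

lemma cp_exists: "i \<in> {1..m} \<Longrightarrow> \<exists>j\<in>{1..k}. connection_point m k T \<sigma> i j"
proof (rule ccontr)
  assume iI: "i \<in> {1..m}" and ncp: "\<not> (\<exists>j\<in>{1..k}. connection_point m k T \<sigma> i j)"
  have a: "\<sigma> x \<in> row k T i" if "x \<in> row k T i" for x
  proof -
    from that obtain j where "j \<in> {1..k}" "x = T i j" unfolding row_def by blast
    then show ?thesis using ncp unfolding connection_point_def by blast
  qed
  have b: "x \<notin> row k T i'" if "x \<in> row k T i" "i' \<in> {1..m}" "i' \<noteq> i" for x i'
  proof -
    from that(1) obtain j where "j \<in> {1..k}" "x = T i j" unfolding row_def by blast
    then show ?thesis using that(2,3) ncp unfolding connection_point_def by blast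
  qed
  have c: "\<sigma> ` row k T i = row k T i"
  proof (rule endo_inj_surj[OF fin_row])
    show "\<sigma> ` row k T i \<subseteq> row k T i" using a by blast
    show "inj_on \<sigma> (row k T i)" by (rule inj_on_subset[OF sig_inj]) simp
  qed
  have c': "y \<in> row k T i" if "\<sigma> y \<in> row k T i" for y
  proof -
    have "\<sigma> y \<in> \<sigma> ` row k T i" using that c by simp
    then show ?thesis by (simp add: inj_image_mem_iff[OF sig_inj])
  qed
  have stay: "fst w = i" if "(graph_edge m k T \<sigma>)\<^sup>*\<^sup>* v w" "fst v = i" for v w
    using that(1)
  proof (induction rule: rtranclp_induct)
    case base then show ?case using that(2) by simp
  next
    case (step y z)
    have yv: "y \<in> vertices m k" and zv: "z \<in> vertices m k" using edge_vert[OF step.hyps(2)] by auto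
    obtain j where yj: "y = (i, j)" "j \<in> {1..k}" using yv step.IH unfolding vertices_def by (cases y) auto
    obtain i' j' where zj: "z = (i', j')" "i' \<in> {1..m}" "j' \<in> {1..k}" using zv unfolding vertices_def by auto
    have xrow: "T i j \<in> row k T i" using yj unfolding row_def by blast
    have urow: "T i' j' \<in> row k T i'" using zj unfolding row_def by blast
    show ?case
    proof (rule ccontr)
      assume ne: "fst z \<noteq> i"
      then have ne': "i' \<noteq> i" using zj by simp
      have "T i' j' \<in> row k T i"
        using step.hyps(2) unfolding graph_edge_def
      proof
        assume "black_edge m k y z"
        then show ?thesis using ne' yj zj unfolding black_edge_def by simp
      next
        assume "red_edge m k T \<sigma> y z"
        then show ?thesis unfolding red_edge_def
        proof
          assume "solid_red m k T y z"
          then show ?thesis using xrow yj zj unfolding solid_red_def by simp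
        next
          assume "dotted_red m k T \<sigma> y z"
          then have "\<sigma> (T i j) = T i' j' \<or> \<sigma> (T i' j') = T i j" using yj zj unfolding dotted_red_def by simp
          then show ?thesis using a[OF xrow] c' xrow by auto
        qed
      qed
      then show False using b urow zj(2) ne' by blast
    qed
  qed
  define i' where "i' = (if i = 1 then 2 else (1::nat))"
  have i'I: "i' \<in> {1..m}" "i' \<noteq> i" using m2 iI unfolding i'_def by auto
  have "(i, 1) \<in> vertices m k" "(i', 1) \<in> vertices m k" using iI i'I k2 unfolding vertices_def by auto
  then have "(graph_edge m k T \<sigma>)\<^sup>*\<^sup>* (i, 1) (i', 1)" using conn unfolding graph_connected_def by blast
  then have "fst (i', 1::nat) = i" using stay by fastforce
  then show False using i'I by simp
qed

lemma cp_act: "i \<in> {1..m} \<Longrightarrow> j \<in> {1..k} \<Longrightarrow> connection_point m k T \<sigma> i j \<Longrightarrow> act (T i j)"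
proof -
  assume iI: "i \<in> {1..m}" and jK: "j \<in> {1..k}" and cp: "connection_point m k T \<sigma> i j"
  have xr: "T i j \<in> row k T i" using jK unfolding row_def by blast
  show ?thesis
  proof (cases "\<sigma> (T i j) \<notin> row k T i")
    case True
    then have "\<sigma> (T i j) \<noteq> T i j" using xr by auto
    then show ?thesis unfolding act_def by blast
  next
    case False
    then have "\<exists>i'\<in>{1..m}. i' \<noteq> i \<and> T i j \<in> row k T i'" using cp unfolding connection_point_def by blast
    then have "cnt (T i j) \<ge> 2" using shared_iff[OF iI xr] by blast
    then show ?thesis unfolding act_def by blast
  qed
qed

lemma two_act:
  assumes iI: "i \<in> {1..m}" and nr: "\<not> reducible m k T \<sigma>"
  shows "\<exists>x1 x2. x1 \<in> row k T i \<and> x2 \<in> row k T i \<and> x1 \<noteq> x2 \<and> act x1 \<and> act x2"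
proof -
  obtain j0 where j0: "j0 \<in> {1..k}" "connection_point m k T \<sigma> i j0" using cp_exists[OF iI] by blast
  have x1r: "T i j0 \<in> row k T i" using j0 unfolding row_def by blast
  have a1: "act (T i j0)" using cp_act[OF iI j0] .
  have "\<not> (\<forall>j'\<in>{1..k}. connection_point m k T \<sigma> i j' \<longrightarrow> T i j' = T i j0) \<or>
        \<not> (\<forall>x\<in>row k T i. x \<noteq> T i j0 \<longrightarrow> \<sigma> x = x)"
    using nr conn iI j0 unfolding reducible_def by blast
  then show ?thesis
  proof (elim disjE)
    assume "\<not> (\<forall>j'\<in>{1..k}. connection_point m k T \<sigma> i j' \<longrightarrow> T i j' = T i j0)"
    then obtain j' where j': "j' \<in> {1..k}" "connection_point m k T \<sigma> i j'" "T i j' \<noteq> T i j0" by blast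
    have "T i j' \<in> row k T i" using j' unfolding row_def by blast
    then show ?thesis using x1r a1 cp_act[OF iI j'(1,2)] j'(3) by blast
  next
    assume "\<not> (\<forall>x\<in>row k T i. x \<noteq> T i j0 \<longrightarrow> \<sigma> x = x)"
    then obtain y where "y \<in> row k T i" "y \<noteq> T i j0" "\<sigma> y \<noteq> y" by blast
    then show ?thesis using x1r a1 unfolding act_def by blast
  qed
qed

lemma row_split:
  assumes iI: "i \<in> {1..m}" and x1: "x1 \<in> row k T i" and x2: "x2 \<in> row k T i" and ne: "x1 \<noteq> x2"
  shows "(\<Sum>x\<in>row k T i. fv x) = fv x1 + fv x2 + (\<Sum>x\<in>row k T i - {x1} - {x2}. fv x)"
proof -
  have "(\<Sum>x\<in>row k T i. fv x) = fv x1 + (\<Sum>x\<in>row k T i - {x1}. fv x)"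
    using x1 fin_row by (rule sum.remove[rotated])
  also have "(\<Sum>x\<in>row k T i - {x1}. fv x) = fv x2 + (\<Sum>x\<in>row k T i - {x1} - {x2}. fv x)"
    using x2 ne fin_row by (intro sum.remove) auto
  finally show ?thesis by simp
qed

lemma rest_nonneg: "i \<in> {1..m} \<Longrightarrow> A \<subseteq> row k T i \<Longrightarrow> 0 \<le> (\<Sum>x\<in>A. fv x)"
  using row_sub fv_nonneg by (intro sum_nonneg) blast

lemma row_ge:
  assumes iI: "i \<in> {1..m}" and nr: "\<not> reducible m k T \<sigma>"
  shows "1 \<le> (\<Sum>x\<in>row k T i. fv x)"
proof -
  obtain x1 x2 where x: "x1 \<in> row k T i" "x2 \<in> row k T i" "x1 \<noteq> x2" "act x1" "act x2"
    using two_act[OF iI nr] by blast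
  have "fv x1 \<ge> 1/2" "fv x2 \<ge> 1/2" 
  proof -
    have r1: "x1 \<in> R" "x2 \<in> R" using x(1,2) row_sub[OF iI] by (blast, blast)
    show "fv x1 \<ge> 1/2" by (rule fv_half[OF r1(1) x(4)])
    show "fv x2 \<ge> 1/2" by (rule fv_half[OF r1(2) x(5)])
  qed
  moreover have "0 \<le> (\<Sum>x\<in>row k T i - {x1} - {x2}. fv x)" by (rule rest_nonneg[OF iI]) blast
  ultimately show ?thesis using row_split[OF iI x(1,2,3)] by linarith
qed

lemma row_eq:
  assumes iI: "i \<in> {1..m}" and nr: "\<not> reducible m k T \<sigma>" and eq: "(\<Sum>x\<in>row k T i. fv x) = 1"
  shows "\<exists>x1 x2. x1 \<noteq> x2 \<and> {x\<in>row k T i. act x} = {x1, x2} \<and> fv x1 = 1/2 \<and> fv x2 = 1/2"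
proof -
  obtain x1 x2 where x: "x1 \<in> row k T i" "x2 \<in> row k T i" "x1 \<noteq> x2" "act x1" "act x2"
    using two_act[OF iI nr] by blast
  have h: "fv x1 \<ge> 1/2" "fv x2 \<ge> 1/2" 
  proof -
    have r1: "x1 \<in> R" "x2 \<in> R" using x(1,2) row_sub[OF iI] by (blast, blast)
    show "fv x1 \<ge> 1/2" by (rule fv_half[OF r1(1) x(4)])
    show "fv x2 \<ge> 1/2" by (rule fv_half[OF r1(2) x(5)])
  qed
  define A where "A = row k T i - {x1} - {x2}"
  have r0: "0 \<le> (\<Sum>x\<in>A. fv x)" unfolding A_def by (rule rest_nonneg[OF iI]) blast
  have sp: "1 = fv x1 + fv x2 + (\<Sum>x\<in>A. fv x)" using row_split[OF iI x(1,2,3)] eq unfolding A_def by simp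
  have f1: "fv x1 = 1/2" "fv x2 = 1/2" and r: "(\<Sum>x\<in>A. fv x) = 0" using h r0 sp by linarith+
  have "{x\<in>row k T i. act x} = {x1, x2}"
  proof
    show "{x1, x2} \<subseteq> {x\<in>row k T i. act x}" using x by blast
    show "{x\<in>row k T i. act x} \<subseteq> {x1, x2}"
    proof
      fix y assume y: "y \<in> {x\<in>row k T i. act x}"
      show "y \<in> {x1, x2}"
      proof (rule ccontr)
        assume "y \<notin> {x1, x2}"
        then have yA: "y \<in> A" using y unfolding A_def by blast
        have "y \<in> R" using y row_sub[OF iI] by blast
        moreover have "act y" using y by blast
        ultimately have "fv y \<ge> 1/2" by (rule fv_half)
        moreover have "fv y \<le> (\<Sum>x\<in>A. fv x)"
        proof (rule member_le_sum[OF yA])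
          show "finite A" unfolding A_def using fin_row by simp
          fix x assume "x \<in> A - {y}"
          then have "x \<in> R" using row_sub[OF iI] unfolding A_def by blast
          then show "0 \<le> fv x" by (rule fv_nonneg)
        qed
        ultimately show False using r by linarith
      qed
    qed
  qed
  then show ?thesis using x(3) f1 by blast
qed

lemma part1:
  assumes nr: "\<not> reducible m k T \<sigma>"
  shows "real m \<le> real (k * m) - real (card R) + real (a_perm R \<sigma>) / 2"
proof -
  have "(\<Sum>i\<in>{1..m}. (1::real)) \<le> (\<Sum>i\<in>{1..m}. \<Sum>x\<in>row k T i. fv x)"
    by (rule sum_mono) (rule row_ge[OF _ nr])
  then show ?thesis using total by simp
qed

lemma all_rows_eq:
  assumes nr: "\<not> reducible m k T \<sigma>"
    and eq: "real (k * m) - real (card R) + real (a_perm R \<sigma>) / 2 = real m"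
  shows "\<And>i. i \<in> {1..m} \<Longrightarrow> (\<Sum>x\<in>row k T i. fv x) = 1"
proof -
  fix i assume iI: "i \<in> {1..m}"
  have "(\<Sum>i\<in>{1..m}. (\<Sum>x\<in>row k T i. fv x) - 1) = (\<Sum>i\<in>{1..m}. \<Sum>x\<in>row k T i. fv x) - real m"
    by (simp add: sum_subtractf)
  also have "\<dots> = 0" using total eq by simp
  finally have "(\<Sum>i\<in>{1..m}. (\<Sum>x\<in>row k T i. fv x) - 1) = 0" .
  moreover have "\<forall>i\<in>{1..m}. 0 \<le> (\<Sum>x\<in>row k T i. fv x) - 1" using row_ge[OF _ nr] by simp
  ultimately have "\<forall>i\<in>{1..m}. (\<Sum>x\<in>row k T i. fv x) - 1 = 0"
    using sum_nonneg_eq_0_iff[of "{1..m}" "\<lambda>i. (\<Sum>x\<in>row k T i. fv x) - 1"] by simp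
  then show "(\<Sum>x\<in>row k T i. fv x) = 1" using iI by simp
qed

lemma orbit_sub: assumes xR: "x \<in> R" shows "orbit \<sigma> x \<subseteq> R"
proof
  fix y assume "y \<in> orbit \<sigma> x"
  then show "y \<in> R"
  proof (induction rule: orbit.induct)
    case base show ?case by (rule sig_R[OF xR])
  next
    case (step y) then show ?case using sig_R by blast
  qed
qed

lemma orbit3:
  assumes xR: "x \<in> R" and ne: "\<sigma> (\<sigma> x) \<noteq> x"
  shows "card (orbit \<sigma> x) \<ge> 3"
proof -
  have o1: "\<sigma> x \<in> orbit \<sigma> x" by (rule orbit.base)
  have o2: "\<sigma> (\<sigma> x) \<in> orbit \<sigma> x" by (rule orbit.step[OF o1])
  have o3: "\<sigma> (\<sigma> (\<sigma> x)) \<in> orbit \<sigma> x" by (rule orbit.step[OF o2])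
  have d1: "\<sigma> x \<noteq> \<sigma> (\<sigma> x)"
  proof
    assume "\<sigma> x = \<sigma> (\<sigma> x)"
    then have "x = \<sigma> x" using sig_inj by (metis injD)
    then show False using ne by simp
  qed
  have d2: "\<sigma> (\<sigma> (\<sigma> x)) \<noteq> \<sigma> x"
  proof
    assume "\<sigma> (\<sigma> (\<sigma> x)) = \<sigma> x"
    then have "\<sigma> (\<sigma> x) = x" using sig_inj by (metis injD)
    then show False using ne by simp
  qed
  have d3: "\<sigma> (\<sigma> (\<sigma> x)) \<noteq> \<sigma> (\<sigma> x)"
  proof
    assume "\<sigma> (\<sigma> (\<sigma> x)) = \<sigma> (\<sigma> x)"
    then have "\<sigma> (\<sigma> x) = \<sigma> x" using sig_inj by (metis injD)
    then show False using d1 by simp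
  qed
  have fin: "finite (orbit \<sigma> x)" using orbit_sub[OF xR] finR finite_subset by blast
  have "card {\<sigma> x, \<sigma> (\<sigma> x), \<sigma> (\<sigma> (\<sigma> x))} = 3" using d1 d2 d3 by auto
  moreover have "card {\<sigma> x, \<sigma> (\<sigma> x), \<sigma> (\<sigma> (\<sigma> x))} \<le> card (orbit \<sigma> x)"
    by (rule card_mono[OF fin]) (use o1 o2 o3 in blast)
  ultimately show ?thesis by simp
qed

lemma inj_pos: "i \<in> {1..m} \<Longrightarrow> j \<in> {1..k} \<Longrightarrow> b \<in> {1..k} \<Longrightarrow> T i j = T i b \<Longrightarrow> j = b"
  using tup unfolding is_tuple_def inj_on_def by blast

lemma same_row: "i \<in> {1..m} \<Longrightarrow> a \<in> {1..m} \<Longrightarrow> x \<in> row k T i \<Longrightarrow> x \<in> row k T a \<Longrightarrow> cnt x < 2 \<Longrightarrow> a = i"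
  using shared_iff by force

lemma in_row: "j \<in> {1..k} \<Longrightarrow> T i j \<in> row k T i"
  unfolding row_def by blast

lemma vert_iff: "(a, b) \<in> vertices m k \<longleftrightarrow> a \<in> {1..m} \<and> b \<in> {1..k}"
  unfolding vertices_def by simp

lemma no_red_inact:
  assumes iI: "i \<in> {1..m}" and jK: "j \<in> {1..k}" and na: "\<not> act (T i j)"
  shows "\<not> red_edge m k T \<sigma> (i, j) u"
proof
  assume re: "red_edge m k T \<sigma> (i, j) u"
  obtain a b where u: "u = (a, b)" by (cases u)
  have c1: "cnt (T i j) < 2" and s1: "\<sigma> (T i j) = T i j" using na unfolding act_def by auto
  from re show False unfolding red_edge_def
  proof
    assume "solid_red m k T (i, j) u"
    then have ab: "a \<in> {1..m}" "b \<in> {1..k}" "(i, j) \<noteq> (a, b)" "T i j = T a b"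
      unfolding solid_red_def u vert_iff by auto
    then have "a = i" using same_row[OF iI ab(1) in_row[OF jK] _ c1] in_row[OF ab(2)] by simp
    then have "b = j" using inj_pos[OF iI jK ab(2)] ab(4) by simp
    then show False using ab \<open>a = i\<close> by simp
  next
    assume "dotted_red m k T \<sigma> (i, j) u"
    then have ab: "T i j \<noteq> T a b" "\<sigma> (T i j) = T a b \<or> \<sigma> (T a b) = T i j"
      unfolding dotted_red_def u by auto
    then have "\<sigma> (T a b) = \<sigma> (T i j)" using s1 by auto
    then have "T a b = T i j" using sig_inj by (metis injD)
    then show False using ab by simp
  qed
qed

context
  assumes nr: "\<not> reducible m k T \<sigma>"
    and alleq: "\<And>i. i \<in> {1..m} \<Longrightarrow> (\<Sum>x\<in>row k T i. fv x) = 1"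
    and inv: "\<And>x. \<sigma> (\<sigma> x) = x"
begin

lemma act_half: "x \<in> R \<Longrightarrow> act x \<Longrightarrow> fv x = 1/2"
proof -
  assume xR: "x \<in> R" and a: "act x"
  obtain i where iI: "i \<in> {1..m}" and xr: "x \<in> row k T i" using xR R_iff by blast
  obtain x1 x2 where "x1 \<noteq> x2" "{x\<in>row k T i. act x} = {x1, x2}" "fv x1 = 1/2" "fv x2 = 1/2"
    using row_eq[OF iI nr alleq[OF iI]] by blast
  moreover have "x \<in> {x\<in>row k T i. act x}" using xr a by blast
  ultimately have "x = x1 \<or> x = x2" by blast
  then show ?thesis using \<open>fv x1 = 1/2\<close> \<open>fv x2 = 1/2\<close> by auto
qed

lemma moved_out:
  assumes iI: "i \<in> {1..m}" and xr: "x \<in> row k T i" and mv: "\<sigma> x \<noteq> x"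
  shows "\<sigma> x \<notin> row k T i"
proof
  assume zr: "\<sigma> x \<in> row k T i"
  obtain x1 x2 where xx: "x1 \<noteq> x2" "{x\<in>row k T i. act x} = {x1, x2}"
    using row_eq[OF iI nr alleq[OF iI]] by blast
  have ax: "act x" using mv unfolding act_def by blast
  have mz: "\<sigma> (\<sigma> x) \<noteq> \<sigma> x" using mv inv by metis
  have az: "act (\<sigma> x)" using mz unfolding act_def by blast
  have sub: "{x, \<sigma> x} \<subseteq> {x1, x2}" using xx(2) ax az xr zr by blast
  obtain j0 where j0: "j0 \<in> {1..k}" "connection_point m k T \<sigma> i j0" using cp_exists[OF iI] by blast
  define y where "y = T i j0"
  have ay: "act y" unfolding y_def by (rule cp_act[OF iI j0])
  have yr: "y \<in> row k T i" unfolding y_def using j0 in_row by blast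
  have "y \<in> {x1, x2}" using xx(2) ay yr by blast
  then have yxz: "y = x \<or> y = \<sigma> x" using sub mv xx(1) by auto
  then have my: "\<sigma> y \<noteq> y" using mv mz by auto
  have syr: "\<sigma> y \<in> row k T i" using yxz inv zr xr by auto
  have "y \<in> R" using yr row_sub[OF iI] by blast
  then have "fv y = 1/2" using act_half ay by blast
  then have c1: "cnt y = 1" using fv_eq_half \<open>y \<in> R\<close> my by blast
  have "\<not> (\<exists>i'\<in>{1..m}. i' \<noteq> i \<and> y \<in> row k T i')" using shared_iff[OF iI yr] c1 by simp
  then show False using j0(2) syr unfolding connection_point_def y_def by blast
qed

lemma sor_act:
  assumes iI: "i \<in> {1..m}" and jK: "j \<in> {1..k}" and ax: "act (T i j)"
  shows "single_outer_red m k T \<sigma> i j"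
proof -
  define x where "x = T i j"
  have xr: "x \<in> row k T i" unfolding x_def using jK in_row by blast
  have xR: "x \<in> R" using xr row_sub[OF iI] by blast
  have "fv x = 1/2" using act_half[OF xR] ax unfolding x_def by blast
  then have cs: "(cnt x = 2 \<and> \<sigma> x = x) \<or> (cnt x = 1 \<and> \<sigma> x \<noteq> x)" using fv_eq_half[OF xR] by blast
  then show ?thesis
  proof (elim disjE conjE)
    assume c2: "cnt x = 2" and fx: "\<sigma> x = x"
    obtain i' where i': "i' \<in> {1..m}" "i' \<noteq> i" "x \<in> row k T i'" using shared_iff[OF iI xr] c2 by auto
    obtain j' where j': "j' \<in> {1..k}" "x = T i' j'" using i'(3) unfolding row_def by blast
    have "{u. red_edge m k T \<sigma> (i, j) u} = {(i', j')}"
    proof (intro set_eqI iffI)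
      fix u assume "u \<in> {u. red_edge m k T \<sigma> (i, j) u}"
      then have re: "red_edge m k T \<sigma> (i, j) u" by simp
      obtain a b where u: "u = (a, b)" by (cases u)
      from re show "u \<in> {(i', j')}" unfolding red_edge_def
      proof
        assume "solid_red m k T (i, j) u"
        then have ab: "a \<in> {1..m}" "b \<in> {1..k}" "(i, j) \<noteq> (a, b)" "T i j = T a b"
          unfolding solid_red_def u vert_iff by auto
        have xa: "x \<in> row k T a" using ab in_row unfolding x_def by metis
        have "a = i \<or> a = i'"
        proof (rule ccontr)
          assume "\<not> (a = i \<or> a = i')"
          then have "card {i, i', a} = 3" using i'(2) by auto
          moreover have "card {i, i', a} \<le> cnt x" unfolding cnt_def
            by (rule card_mono) (use iI i' ab xa xr in auto)
          ultimately show False using c2 by simp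
        qed
        then show ?thesis
        proof
          assume "a = i"
          then have "b = j" using inj_pos[OF iI jK ab(2)] ab(4) by simp
          then show ?thesis using ab \<open>a = i\<close> by simp
        next
          assume "a = i'"
          then have "b = j'" using inj_pos[OF i'(1) j'(1) ab(2)] ab(4) j'(2) unfolding x_def by simp
          then show ?thesis using u \<open>a = i'\<close> by simp
        qed
      next
        assume "dotted_red m k T \<sigma> (i, j) u"
        then have ab: "T i j \<noteq> T a b" "\<sigma> (T i j) = T a b \<or> \<sigma> (T a b) = T i j"
          unfolding dotted_red_def u by auto
        then have "\<sigma> (T a b) = \<sigma> (T i j)" using fx unfolding x_def by auto
        then have "T a b = T i j" using sig_inj by (metis injD)
        then show ?thesis using ab by simp
      qed
    next
      fix u assume "u \<in> {(i', j')}"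
      then have u: "u = (i', j')" by simp
      have "solid_red m k T (i, j) u"
        unfolding solid_red_def u vert_iff using iI jK i' j' unfolding x_def by auto
      then show "u \<in> {u. red_edge m k T \<sigma> (i, j) u}" unfolding red_edge_def by simp
    qed
    then show ?thesis unfolding single_outer_red_def using i'(2) by auto
  next
    assume c1: "cnt x = 1" and mv: "\<sigma> x \<noteq> x"
    define z where "z = \<sigma> x"
    have zo: "z \<notin> row k T i" unfolding z_def by (rule moved_out[OF iI xr mv])
    have zR: "z \<in> R" unfolding z_def by (rule sig_R[OF xR])
    obtain i' where i': "i' \<in> {1..m}" "z \<in> row k T i'" using zR R_iff by blast
    have ii': "i' \<noteq> i" using i' zo by blast
    obtain j' where j': "j' \<in> {1..k}" "z = T i' j'" using i'(2) unfolding row_def by blast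
    have sz: "\<sigma> z = x" unfolding z_def by (rule inv)
    have mz: "\<sigma> z \<noteq> z" using sz mv unfolding z_def by simp
    have "act z" using mz unfolding act_def by blast
    then have "fv z = 1/2" using act_half[OF zR] by blast
    then have cz: "cnt z = 1" using fv_eq_half[OF zR] mz by blast
    have "{u. red_edge m k T \<sigma> (i, j) u} = {(i', j')}"
    proof (intro set_eqI iffI)
      fix u assume "u \<in> {u. red_edge m k T \<sigma> (i, j) u}"
      then have re: "red_edge m k T \<sigma> (i, j) u" by simp
      obtain a b where u: "u = (a, b)" by (cases u)
      from re show "u \<in> {(i', j')}" unfolding red_edge_def
      proof
        assume "solid_red m k T (i, j) u"
        then have ab: "a \<in> {1..m}" "b \<in> {1..k}" "(i, j) \<noteq> (a, b)" "T i j = T a b"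
          unfolding solid_red_def u vert_iff by auto
        have xa: "x \<in> row k T a" using ab in_row unfolding x_def by metis
        have "a = i" using same_row[OF iI ab(1) xr xa] c1 by simp
        then have "b = j" using inj_pos[OF iI jK ab(2)] ab(4) by simp
        then show ?thesis using ab \<open>a = i\<close> by simp
      next
        assume "dotted_red m k T \<sigma> (i, j) u"
        then have ab: "a \<in> {1..m}" "b \<in> {1..k}" "T i j \<noteq> T a b" "\<sigma> (T i j) = T a b \<or> \<sigma> (T a b) = T i j"
          unfolding dotted_red_def u vert_iff by auto
        have "T a b = z"
        proof (cases "\<sigma> (T i j) = T a b")
          case True then show ?thesis unfolding z_def x_def by simp
        next
          case False
          then have "\<sigma> (T a b) = \<sigma> z" using ab(4) sz unfolding x_def by simp
          then show ?thesis using sig_inj by (metis injD)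
        qed
        then have za: "z \<in> row k T a" using ab(2) in_row by metis
        have "a = i'" using same_row[OF i'(1) ab(1) i'(2) za] cz by simp
        then have "b = j'" using inj_pos[OF i'(1) j'(1) ab(2)] \<open>T a b = z\<close> j'(2) by simp
        then show ?thesis using u \<open>a = i'\<close> by simp
      qed
    next
      fix u assume "u \<in> {(i', j')}"
      then have u: "u = (i', j')" by simp
      have "T i j \<noteq> T i' j'" using mv j'(2) unfolding z_def x_def by metis
      moreover have "\<sigma> (T i j) = T i' j'" using j'(2) unfolding z_def x_def by simp
      ultimately have "dotted_red m k T \<sigma> (i, j) u"
        unfolding dotted_red_def u vert_iff using iI jK i' j' by auto
      then show "u \<in> {u. red_edge m k T \<sigma> (i, j) u}" unfolding red_edge_def by simp
    qed
    then show ?thesis unfolding single_outer_red_def using ii' by auto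
  qed
qed

lemma circ_row:
  assumes iI: "i \<in> {1..m}"
  shows "\<exists>i1 i2. i1 \<noteq> i2 \<and>
        {j \<in> {1..k}. single_outer_red m k T \<sigma> i j} = {i1, i2} \<and>
        (\<forall>j\<in>{1..k} - {i1, i2}. \<forall>u. \<not> red_edge m k T \<sigma> (i, j) u)"
proof -
  obtain x1 x2 where xx: "x1 \<noteq> x2" "{x\<in>row k T i. act x} = {x1, x2}"
    using row_eq[OF iI nr alleq[OF iI]] by blast
  have "x1 \<in> row k T i" "x2 \<in> row k T i" using xx(2) by blast+
  then obtain j1 j2 where j1: "j1 \<in> {1..k}" "x1 = T i j1" and j2: "j2 \<in> {1..k}" "x2 = T i j2"
    unfolding row_def by blast
  have jne: "j1 \<noteq> j2" using xx(1) j1 j2 by blast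
  have key: "act (T i j) \<longleftrightarrow> j \<in> {j1, j2}" if jK: "j \<in> {1..k}" for j
  proof
    assume "act (T i j)"
    then have "T i j \<in> {x1, x2}" using xx(2) in_row[OF jK] by blast
    then show "j \<in> {j1, j2}" using inj_pos[OF iI jK j1(1)] inj_pos[OF iI jK j2(1)] j1(2) j2(2) by auto
  next
    assume "j \<in> {j1, j2}"
    then have "T i j \<in> {x1, x2}" using j1 j2 by auto
    then show "act (T i j)" using xx(2) by blast
  qed
  have sor: "single_outer_red m k T \<sigma> i j \<longleftrightarrow> act (T i j)" if jK: "j \<in> {1..k}" for j
  proof
    assume s: "single_outer_red m k T \<sigma> i j"
    show "act (T i j)"
    proof (rule ccontr)
      assume "\<not> act (T i j)"
      then have "{u. red_edge m k T \<sigma> (i, j) u} = {}" using no_red_inact[OF iI jK] by blast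
      then show False using s unfolding single_outer_red_def by auto
    qed
  next
    assume "act (T i j)"
    then show "single_outer_red m k T \<sigma> i j" by (rule sor_act[OF iI jK])
  qed
  have "{j \<in> {1..k}. single_outer_red m k T \<sigma> i j} = {j1, j2}"
    using sor key j1(1) j2(1) by blast
  moreover have "\<forall>j\<in>{1..k} - {j1, j2}. \<forall>u. \<not> red_edge m k T \<sigma> (i, j) u"
    using key no_red_inact[OF iI] by blast
  ultimately show ?thesis using jne by blast
qed

end

lemma part2:
  assumes nr: "\<not> reducible m k T \<sigma>" and ncl: "\<not> circle_like m k T \<sigma>"
    and eq: "real (k * m) - real (card R) + real (a_perm R \<sigma>) / 2 = real m"
  shows "\<exists>x\<in>R. card (orbit \<sigma> x) \<ge> 3"
proof (rule ccontr)
  assume no: "\<not> (\<exists>x\<in>R. card (orbit \<sigma> x) \<ge> 3)"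
  have inv: "\<sigma> (\<sigma> x) = x" for x
  proof (cases "x \<in> R")
    case True
    then show ?thesis using orbit3 no by blast
  next
    case False
    then show ?thesis using sig_out by simp
  qed
  have al: "(\<Sum>x\<in>row k T i. fv x) = 1" if "i \<in> {1..m}" for i
    using all_rows_eq[OF nr eq that] .
  have "circle_like m k T \<sigma>"
    unfolding circle_like_def irreducible_pair_def
    using conn nr circ_row[OF nr al inv] by blast
  then show False using ncl by simp
qed

end

theorem mainTheorem14:
  fixes m k :: nat
  assumes "m \<ge> 2" and "k \<ge> 2"
  shows "(\<forall>T \<sigma>. in_C m k T \<sigma> \<and> irreducible_pair m k T \<sigma> \<longrightarrow>
            real (k * m) - real (card (RangeT m k T)) + real (a_perm (RangeT m k T) \<sigma>) / 2
              \<ge> real m) \<and>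
         (\<forall>T \<sigma>. in_C m k T \<sigma> \<and> irreducible_pair m k T \<sigma> \<and> \<not> circle_like m k T \<sigma> \<and>
            real (k * m) - real (card (RangeT m k T)) + real (a_perm (RangeT m k T) \<sigma>) / 2
              = real m \<longrightarrow>
            (\<exists>x\<in>RangeT m k T. card (orbit \<sigma> x) \<ge> 3))"
proof (intro conjI allI impI)
  fix T \<sigma>
  assume h: "in_C m k T \<sigma> \<and> irreducible_pair m k T \<sigma>"
  interpret pctx m k T \<sigma>
    using assms h unfolding in_C_def by unfold_locales auto
  show "real (k * m) - real (card (RangeT m k T)) + real (a_perm (RangeT m k T) \<sigma>) / 2 \<ge> real m"
    using part1 h unfolding irreducible_pair_def by blast
next
  fix T \<sigma>
  assume h: "in_C m k T \<sigma> \<and> irreducible_pair m k T \<sigma> \<and> \<not> circle_like m k T \<sigma> \<and>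
            real (k * m) - real (card (RangeT m k T)) + real (a_perm (RangeT m k T) \<sigma>) / 2
              = real m"
  interpret pctx m k T \<sigma>
    using assms h unfolding in_C_def by unfold_locales auto
  show "\<exists>x\<in>RangeT m k T. card (orbit \<sigma> x) \<ge> 3"
    using part2 h unfolding irreducible_pair_def by blast
qed

end
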